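(* Let $Q=(q_n)_{n\ge1}$ be a basic sequence that is infinite in limit, and let $i>2$ be an integer such that $\sum_{j=1}^i jl_j>\sum_{j=1}^i 2l_j$. For real $w,z\ge0$ let $$f_i(w,z)=\frac{\left(\sum_{j=1}^i 2l_j\right)+2w+z}{\left(\sum_{j=1}^i jl_j\right)+(i+1)w+z}.$$ Then for all $(w,z)\in\{0,1,\dots,l_{i+1}\}\times\{0,1,\dots,i\}$, $$f_i(w,z)<f_i(0,i+1)=\frac{\left(\sum_{j=1}^i 2l_j\right)+i+1}{\left(\sum_{j=1}^i jl_j\right)+i+1}.$$
   Context: A basic sequence is a sequence $Q=(q_n)_{n\ge1}$ of integers with $q_n\ge 2$; it is infinite in limit if $q_n\to\infty$. For each positive integer $j$ let $\nu_j=\min\{N : q_m\ge 2j^2 \text{ for all } m\ge N\}$. Define $l_1=\max(\nu_2-1,1)$ and, recursively for $i\ge 2$, $l_i=\max\big(\min\{k\in\mathbb{N} : l_1+2l_2+\cdots+(i-1)l_{i-1}+ik\ge \nu_{i+1}-1\},1\big)$, where $\mathbb{N}$ is the set of positive integers. *)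

theory Defs
  imports Complex_Main
begin

text \<open>A basic sequence Q = (q_n)_{n>=1}, represented as a function nat => int;
  only the values at n >= 1 are relevant.\<close>

definition basic_seq :: "(nat \<Rightarrow> int) \<Rightarrow> bool" where
  "basic_seq q \<longleftrightarrow> (\<forall>n\<ge>1. q n \<ge> 2)"

definition infinite_in_limit :: "(nat \<Rightarrow> int) \<Rightarrow> bool" where
  "infinite_in_limit q \<longleftrightarrow> filterlim q at_top sequentially"

definition nu :: "(nat \<Rightarrow> int) \<Rightarrow> nat \<Rightarrow> nat" where
  "nu q j = (LEAST N. N \<ge> 1 \<and> (\<forall>m\<ge>N. q m \<ge> 2 * int j ^ 2))"

text \<open>lpair q i = (l_i, l_1 + 2 l_2 + ... + i l_i) for i >= 1; index 0 is a dummy.\<close>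
fun lpair :: "(nat \<Rightarrow> int) \<Rightarrow> nat \<Rightarrow> nat \<times> nat" where
  "lpair q 0 = (0, 0)"
| "lpair q (Suc i) =
     (if i = 0 then (let a = max (nu q 2 - 1) 1 in (a, a))
      else (let S = snd (lpair q i);
                k = max (LEAST k. k \<ge> 1 \<and> S + Suc i * k \<ge> nu q (Suc i + 1) - 1) 1
            in (k, S + Suc i * k)))"

definition l :: "(nat \<Rightarrow> int) \<Rightarrow> nat \<Rightarrow> nat" where
  "l q i = fst (lpair q i)"

definition f :: "(nat \<Rightarrow> int) \<Rightarrow> nat \<Rightarrow> real \<Rightarrow> real \<Rightarrow> real" where
  "f q i w z = ((\<Sum>j=1..i. 2 * real (l q j)) + 2 * w + z) /
               ((\<Sum>j=1..i. real j * real (l q j)) + (real i + 1) * w + z)"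

end

theory Submission
  imports Defs
begin

lemma key:
  fixes A B ii w z :: real
  assumes "B > A" "A \<ge> 0" "2 * B \<le> ii * A" "ii > 2" "w \<ge> 0" "z \<ge> 0" "z \<le> ii"
  shows "(A + 2*w + z) / (B + (ii+1)*w + z) < (A + (ii+1)) / (B + (ii+1))"
proof -
  have d1: "B + (ii+1)*w + z > 0" using assms by (smt (verit) mult_nonneg_nonneg)
  have d2: "B + (ii+1) > 0" using assms by linarith
  have c1: "(ii+1-z)*(B-A) > 0" using assms by (intro mult_pos_pos) auto
  have "2*B \<le> (ii+1)*A" using assms by (simp add: algebra_simps)
  hence c2: "w*((ii+1)*A - 2*B + (ii+1)*(ii-1)) \<ge> 0"
    using assms by (intro mult_nonneg_nonneg) (auto intro!: add_nonneg_nonneg mult_nonneg_nonneg)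
  have "(A + 2*w + z) * (B + (ii+1)) < (A + (ii+1)) * (B + (ii+1)*w + z)"
    using c1 c2 by (simp add: algebra_simps)
  thus ?thesis using d1 d2 by (simp add: divide_simps)
qed

theorem mainTheorem15:
  fixes q :: "nat \<Rightarrow> int" and i :: nat
  assumes "basic_seq q" and "infinite_in_limit q"
    and "i > 2"
    and "(\<Sum>j=1..i. j * l q j) > (\<Sum>j=1..i. 2 * l q j)"
  shows "\<forall>w \<in> {0..l q (i+1)}. \<forall>z \<in> {0..i}.
           f q i (real w) (real z) < f q i 0 (real (i+1))
         \<and> f q i 0 (real (i+1)) =
             ((\<Sum>j=1..i. 2 * real (l q j)) + real i + 1) /
             ((\<Sum>j=1..i. real j * real (l q j)) + real i + 1)"
proof (intro ballI conjI)
  define A where "A = (\<Sum>j=1..i. 2 * real (l q j))"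
  define B where "B = (\<Sum>j=1..i. real j * real (l q j))"
  have AB: "B > A" unfolding A_def B_def using assms(4)
    by (metis (no_types, lifting) of_nat_less_iff of_nat_mult of_nat_sum of_nat_numeral sum.cong)
  have A0: "A \<ge> 0" unfolding A_def by (auto intro: sum_nonneg)
  have "2 * B \<le> (\<Sum>j=1..i. 2 * real i * real (l q j))" unfolding B_def sum_distrib_left
    by (intro sum_mono) (auto intro: mult_right_mono)
  also have "\<dots> = real i * A" unfolding A_def sum_distrib_left by (simp add: algebra_simps)
  finally have BA: "2 * B \<le> real i * A" .
  fix w z assume w: "w \<in> {0..l q (i+1)}" and z: "z \<in> {0..i}"
  have "(A + 2*real w + real z) / (B + (real i+1)*real w + real z) < (A + (real i+1)) / (B + (real i+1))"
    using key[OF AB A0 BA] assms(3) z by auto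
  thus "f q i (real w) (real z) < f q i 0 (real (i+1))"
    unfolding f_def A_def B_def by (simp add: add.assoc add.commute)
  show "f q i 0 (real (i+1)) =
             ((\<Sum>j=1..i. 2 * real (l q j)) + real i + 1) /
             ((\<Sum>j=1..i. real j * real (l q j)) + real i + 1)"
    unfolding f_def by (simp add: add.assoc add.commute)
qed

end
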